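(* Let $q\ge2$ be even and let $A(n,m)$ denote the number of $m$-RCD roots in $\Sigma_q^n$. If $m\ge\lceil\log_q n\rceil+1$, then $A(n,m)\ge (q-1)q^{n-1}$.
   Context: $\Sigma_q=\{0,\dots,q-1\}$, $\boldsymbol{x}_{[a,b]}=x_a\cdots x_b$. A complement operation is a fixed bijection $a\mapsto\overline{a}$ on $\Sigma_q$ with $\overline{a}\ne a$, $\overline{\overline{a}}=a$; $\boldsymbol{x}^{RC}=\overline{x_n}\cdots\overline{x_1}$ for $\boldsymbol{x}=x_1\cdots x_n$. For an integer $m\ge2$, a string $\boldsymbol{x}\in\Sigma_q^n$ is an $m$-RCD root if $\boldsymbol{x}_{[i+m,i+2m-1]}\ne\boldsymbol{x}_{[i,i+m-1]}^{RC}$ for every $i\in[1,n-2m+1]$. *)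

theory Defs
  imports Complex_Main
begin

definition is_complement :: "nat \<Rightarrow> (nat \<Rightarrow> nat) \<Rightarrow> bool" where
  "is_complement q c \<longleftrightarrow> (\<forall>a<q. c a < q \<and> c a \<noteq> a \<and> c (c a) = a)"

definition rev_comp :: "(nat \<Rightarrow> nat) \<Rightarrow> nat list \<Rightarrow> nat list" where
  "rev_comp c x = rev (map c x)"

text \<open>Substring x_[a,b] with 1-based a,b corresponds to take (b-a+1) (drop (a-1) x).
  Condition for i in [1, n-2m+1] rewritten with 0-based j = i-1: j + 2m <= n.\<close>
definition rcd_root :: "(nat \<Rightarrow> nat) \<Rightarrow> nat \<Rightarrow> nat list \<Rightarrow> bool" where
  "rcd_root c m x \<longleftrightarrow>
     (\<forall>j. j + 2 * m \<le> length x \<longrightarrow>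
        take m (drop (j + m) x) \<noteq> rev_comp c (take m (drop j x)))"

definition A :: "nat \<Rightarrow> (nat \<Rightarrow> nat) \<Rightarrow> nat \<Rightarrow> nat \<Rightarrow> nat" where
  "A q c n m = card {x. length x = n \<and> set x \<subseteq> {..<q} \<and> rcd_root c m x}"

end

theory Submission
  imports Defs
begin

lemma bad_card:
  assumes jm: "j + 2 * m \<le> n"
  shows "card {x. length x = n \<and> set x \<subseteq> {..<q} \<and>
            take m (drop (j + m) x) = rev_comp c (take m (drop j x))} \<le> q ^ (n - m)"
proof -
  let ?B = "{x. length x = n \<and> set x \<subseteq> {..<q} \<and>
            take m (drop (j + m) x) = rev_comp c (take m (drop j x))}"
  let ?f = "\<lambda>x::nat list. take (j + m) x @ drop (j + 2 * m) x"
  have dec: "x = take (j + m) x @ rev_comp c (drop j (take (j + m) x)) @ drop (j + 2 * m) x"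
    if "x \<in> ?B" for x
  proof -
    have e: "take m (drop (j + m) x) = rev_comp c (drop j (take (j + m) x))"
      using that by (simp add: take_drop add.commute)
    have "x = take (j + m) x @ take m (drop (j + m) x) @ drop m (drop (j + m) x)"
      by (simp only: append_take_drop_id)
    also have "drop m (drop (j + m) x) = drop (j + 2 * m) x"
      by (simp add: add.commute add.left_commute mult_2)
    finally show ?thesis using e by simp
  qed
  have inj: "inj_on ?f ?B"
  proof (rule inj_onI)
    fix x y assume x: "x \<in> ?B" and y: "y \<in> ?B" and eq: "?f x = ?f y"
    have lx: "length (take (j + m) x) = j + m" using x jm by simp
    have ly: "length (take (j + m) y) = j + m" using y jm by simp
    have t: "take (j + m) x = take (j + m) y" and d: "drop (j + 2 * m) x = drop (j + 2 * m) y"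
      using eq lx ly by (simp_all add: append_eq_append_conv)
    show "x = y" using dec[OF x] dec[OF y] t d by metis
  qed
  have img: "?f ` ?B \<subseteq> {xs. set xs \<subseteq> {..<q} \<and> length xs = n - m}"
  proof
    fix z assume "z \<in> ?f ` ?B"
    then obtain x where x: "x \<in> ?B" and z: "z = ?f x" by blast
    have "set z \<subseteq> set x" using z by (auto dest: in_set_takeD in_set_dropD)
    moreover have "length z = n - m" using z x jm by auto
    ultimately show "z \<in> {xs. set xs \<subseteq> {..<q} \<and> length xs = n - m}" using x by auto
  qed
  have "card ?B = card (?f ` ?B)" using inj by (simp add: card_image)
  also have "\<dots> \<le> card {xs. set xs \<subseteq> {..<q} \<and> length xs = n - m}"
    by (rule card_mono[OF _ img]) (simp add: finite_lists_length_eq)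
  also have "\<dots> = q ^ (n - m)" by (simp add: card_lists_length_eq)
  finally show ?thesis .
qed

theorem lemma3:
  fixes q n m :: nat and c :: "nat \<Rightarrow> nat"
  assumes "q \<ge> 2" and "even q"
    and "is_complement q c"
    and "n \<ge> 1" and "m \<ge> 2"
    and "int m \<ge> \<lceil>log (real q) (real n)\<rceil> + 1"
  shows "A q c n m \<ge> (q - 1) * q ^ (n - 1)"
proof -
  define S where "S = {x::nat list. length x = n \<and> set x \<subseteq> {..<q}}"
  define B where "B j = {x. length x = n \<and> set x \<subseteq> {..<q} \<and>
            take m (drop (j + m) x) = rev_comp c (take m (drop j x))}" for j
  define J where "J = {..<n + 1 - 2 * m}"
  have Jm: "j \<in> J \<longleftrightarrow> j + 2 * m \<le> n" for j unfolding J_def by auto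
  have finS: "finite S" unfolding S_def using finite_lists_length_eq[of "{..<q}" n]
    by (simp add: conj_commute)
  have cardS: "card S = q ^ n" unfolding S_def using card_lists_length_eq[of "{..<q}" n]
    by (simp add: conj_commute)
  have set_eq: "{x. length x = n \<and> set x \<subseteq> {..<q} \<and> rcd_root c m x} = S - (\<Union>j\<in>J. B j)"
    unfolding S_def B_def rcd_root_def using Jm by auto
  have UB: "card (\<Union>j\<in>J. B j) \<le> card J * q ^ (n - m)"
  proof -
    have "card (\<Union>j\<in>J. B j) \<le> (\<Sum>j\<in>J. card (B j))" by (rule card_UN_le) (simp add: J_def)
    also have "\<dots> \<le> (\<Sum>j\<in>J. q ^ (n - m))"
    proof (rule sum_mono)
      fix j assume "j \<in> J"
      then have "j + 2 * m \<le> n" using Jm by blast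
      then show "card (B j) \<le> q ^ (n - m)" unfolding B_def by (rule bad_card)
    qed
    finally show ?thesis by simp
  qed
  have key: "card J * q ^ (n - m) \<le> q ^ (n - 1)"
  proof (cases "2 * m \<le> n")
    case False
    then have "J = {}" unfolding J_def by auto
    then show ?thesis by simp
  next
    case True
    have q1: "real q > 1" using assms(1) by simp
    have "log (real q) (real n) \<le> real m - 1"
      using assms(6) by linarith
    then have "real n \<le> real q powr (real m - 1)"
      using q1 assms(4) by (simp add: log_le_iff)
    also have "\<dots> = real (q ^ (m - 1))"
      using q1 assms(5) by (simp add: powr_realpow[symmetric] of_nat_diff)
    finally have nq: "n \<le> q ^ (m - 1)" by linarith
    have "card J \<le> n" unfolding J_def using assms(5) by simp
    then have "card J * q ^ (n - m) \<le> q ^ (m - 1) * q ^ (n - m)"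
      using nq by (meson le_trans mult_le_mono1)
    also have "\<dots> = q ^ (n - 1)"
      using True assms(5) by (simp add: power_add[symmetric])
    finally show ?thesis .
  qed
  have "A q c n m = card (S - (\<Union>j\<in>J. B j))" unfolding A_def set_eq ..
  also have "\<dots> \<ge> card S - card (\<Union>j\<in>J. B j)" by (rule diff_card_le_card_Diff, rule finite_subset[OF _ finS]) (auto simp: B_def S_def)
  finally have "A q c n m \<ge> q ^ n - q ^ (n - 1)" using cardS UB key by linarith
  moreover have "q ^ n = q * q ^ (n - 1)" using assms(4)
    by (metis Suc_diff_1 less_le_trans power_Suc zero_less_one)
  ultimately show ?thesis by (simp add: diff_mult_distrib)
qed

end
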